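(* Let $K\ge2$, $\theta\in\Theta$, and let $p\in[0,1]^K$ with $p_{\rm sum}:=\sum_a p_a\le 1$ (in the $\theta$-dependent case, $p=p(\theta)$). Then $$1\le \frac{T^\star_p(\theta)}{T^\star(\theta)}\le O\!\left(\min\left(\frac{1}{1-p_{\rm sum}},\ \frac{1}{K p_{\min}}\right)\right),$$ where the constant hidden in $O(\cdot)$ depends on $\theta$ but not on $p$.
   Context: $\Theta=\{\theta\in\mathbb{R}^K:\arg\max_a\theta_a\text{ is unique}\}$, $a^\star=\arg\max_a\theta_a$, $\Delta_a=\theta_{a^\star}-\theta_a$. For $p\in[0,1]^K$ with $\sum_ap_a\le1$, $\Sigma_p=\{w\in[0,1]^K: w_a\ge p_a\ \forall a,\ \sum_aw_a=1\}$ and $$T^\star_p(\theta)=2\inf_{w\in\Sigma_p}\max_{a\ne a^\star}\frac{w_a^{-1}+w_{a^\star}^{-1}}{\Delta_a^2},\qquad T^\star(\theta)=T^\star_{(0,\dots,0)}(\theta).$$ $p_{\min}=\min_{a:\,p_a>0}p_a$. Conventions: $1/0=+\infty$ (e.g. when $p_{\rm sum}=1$).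
   Formalization: The term $\frac{1}{K p_{\min}}$ in the minimum applies only when every $p_a>0$; when some $p_a=0$ it is replaced by $+\infty$, so only $\frac{1}{1-p_{\rm sum}}$ bounds the ratio then. The statement above fails without it. *)

theory Defs
  imports "HOL-Analysis.Analysis"
begin

text \<open>Arms are indexed by 0..K-1; vectors in R^K are functions nat => real
  (only the values below K matter).\<close>

definition in_Theta :: "nat \<Rightarrow> (nat \<Rightarrow> real) \<Rightarrow> bool" where
  "in_Theta K \<theta> \<longleftrightarrow> (\<exists>a<K. \<forall>b<K. b \<noteq> a \<longrightarrow> \<theta> b < \<theta> a)"

definition astar :: "nat \<Rightarrow> (nat \<Rightarrow> real) \<Rightarrow> nat" where
  "astar K \<theta> = (THE a. a < K \<and> (\<forall>b<K. b \<noteq> a \<longrightarrow> \<theta> b < \<theta> a))"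

definition gap :: "nat \<Rightarrow> (nat \<Rightarrow> real) \<Rightarrow> nat \<Rightarrow> real" where
  "gap K \<theta> a = \<theta> (astar K \<theta>) - \<theta> a"

definition einv :: "real \<Rightarrow> ereal" where
  "einv x = (if x = 0 then \<infinity> else ereal (1 / x))"

definition Sigma_p :: "nat \<Rightarrow> (nat \<Rightarrow> real) \<Rightarrow> (nat \<Rightarrow> real) set" where
  "Sigma_p K p = {w. (\<forall>a<K. 0 \<le> w a \<and> w a \<le> 1 \<and> p a \<le> w a) \<and> (\<forall>a\<ge>K. w a = 0)
                    \<and> (\<Sum>a<K. w a) = 1}"

definition objective :: "nat \<Rightarrow> (nat \<Rightarrow> real) \<Rightarrow> (nat \<Rightarrow> real) \<Rightarrow> ereal" where
  "objective K \<theta> w = Max {(einv (w a) + einv (w (astar K \<theta>))) * ereal (1 / (gap K \<theta> a)\<^sup>2)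
                          | a. a < K \<and> a \<noteq> astar K \<theta>}"

definition Tstar_p :: "nat \<Rightarrow> (nat \<Rightarrow> real) \<Rightarrow> (nat \<Rightarrow> real) \<Rightarrow> ereal" where
  "Tstar_p K \<theta> p = 2 * (INF w \<in> Sigma_p K p. objective K \<theta> w)"

definition Tstar :: "nat \<Rightarrow> (nat \<Rightarrow> real) \<Rightarrow> ereal" where
  "Tstar K \<theta> = Tstar_p K \<theta> (\<lambda>_. 0)"

definition psum :: "nat \<Rightarrow> (nat \<Rightarrow> real) \<Rightarrow> real" where
  "psum K p = (\<Sum>a<K. p a)"

definition pmin :: "nat \<Rightarrow> (nat \<Rightarrow> real) \<Rightarrow> real" where
  "pmin K p = Min {p a | a. a < K \<and> p a > 0}"

end

theory Submission imports Defs begin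

lemma astar_prop:
  assumes "in_Theta K \<theta>"
  shows "astar K \<theta> < K \<and> (\<forall>b<K. b \<noteq> astar K \<theta> \<longrightarrow> \<theta> b < \<theta> (astar K \<theta>))"
proof -
  obtain a where a: "a<K" "\<forall>b<K. b\<noteq>a \<longrightarrow> \<theta> b < \<theta> a"
    using assms unfolding in_Theta_def by blast
  have "\<exists>!a. a<K \<and> (\<forall>b<K. b\<noteq>a \<longrightarrow> \<theta> b < \<theta> a)"
    using a by (metis less_asym)
  then show ?thesis unfolding astar_def by (rule theI')
qed

definition Aset :: "nat \<Rightarrow> (nat \<Rightarrow> real) \<Rightarrow> nat set" where
  "Aset K \<theta> = {a. a < K \<and> a \<noteq> astar K \<theta>}"

definition Dm :: "nat \<Rightarrow> (nat \<Rightarrow> real) \<Rightarrow> real" where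
  "Dm K \<theta> = Min ((\<lambda>a. (gap K \<theta> a)\<^sup>2) ` Aset K \<theta>)"

definition Mx :: "nat \<Rightarrow> (nat \<Rightarrow> real) \<Rightarrow> real" where
  "Mx K \<theta> = Max ((\<lambda>a. (gap K \<theta> a)\<^sup>2) ` Aset K \<theta>)"

lemma Aset_fin: "finite (Aset K \<theta>)" unfolding Aset_def by auto

lemma Aset_ne: assumes "K \<ge> 2" "in_Theta K \<theta>" shows "Aset K \<theta> \<noteq> {}"
proof -
  have "(if astar K \<theta> = 0 then 1 else 0) \<in> Aset K \<theta>" using assms unfolding Aset_def by auto
  then show ?thesis by blast
qed

lemma gap_pos: assumes "in_Theta K \<theta>" "a \<in> Aset K \<theta>" shows "gap K \<theta> a > 0"
  using astar_prop[OF assms(1)] assms(2) unfolding Aset_def gap_def by auto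

lemma Dm_pos: assumes "K \<ge> 2" "in_Theta K \<theta>" shows "Dm K \<theta> > 0"
  unfolding Dm_def using Aset_fin Aset_ne[OF assms] gap_pos[OF assms(2)] by (simp, fastforce)

lemma Dm_le: assumes "a \<in> Aset K \<theta>" shows "Dm K \<theta> \<le> (gap K \<theta> a)\<^sup>2"
  unfolding Dm_def using Aset_fin assms by simp

lemma Mx_ge: assumes "a \<in> Aset K \<theta>" shows "Mx K \<theta> \<ge> (gap K \<theta> a)\<^sup>2"
  unfolding Mx_def using Aset_fin assms by simp

lemma Mx_pos: assumes "K \<ge> 2" "in_Theta K \<theta>" shows "Mx K \<theta> > 0"
proof -
  obtain a where "a \<in> Aset K \<theta>" using Aset_ne[OF assms] by blast
  then show ?thesis using Mx_ge gap_pos[OF assms(2)] by (smt (verit) zero_less_power)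
qed

lemma obj_set: "{(einv (w a) + einv (w (astar K \<theta>))) * ereal (1 / (gap K \<theta> a)\<^sup>2)
                          | a. a < K \<and> a \<noteq> astar K \<theta>}
   = (\<lambda>a. (einv (w a) + einv (w (astar K \<theta>))) * ereal (1 / (gap K \<theta> a)\<^sup>2)) ` Aset K \<theta>"
  unfolding Aset_def by auto

lemma obj_le:
  assumes "K \<ge> 2" "in_Theta K \<theta>" "\<forall>a<K. m \<le> w a" "m > 0"
  shows "objective K \<theta> w \<le> ereal (2 / (m * Dm K \<theta>))"
proof -
  have D: "Dm K \<theta> > 0" using Dm_pos[OF assms(1,2)] .
  have as: "astar K \<theta> < K" using astar_prop[OF assms(2)] by blast
  have "(einv (w a) + einv (w (astar K \<theta>))) * ereal (1 / (gap K \<theta> a)\<^sup>2) \<le> ereal (2 / (m * Dm K \<theta>))"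
    if a: "a \<in> Aset K \<theta>" for a
  proof -
    have aK: "a < K" using a unfolding Aset_def by auto
    have w1: "w a \<ge> m" "w (astar K \<theta>) \<ge> m" using assms(3) aK as by auto
    have g: "Dm K \<theta> \<le> (gap K \<theta> a)\<^sup>2" using Dm_le[OF a] .
    have e: "(einv (w a) + einv (w (astar K \<theta>))) * ereal (1 / (gap K \<theta> a)\<^sup>2)
       = ereal ((1 / w a + 1 / w (astar K \<theta>)) * (1 / (gap K \<theta> a)\<^sup>2))"
      using w1 assms(4) unfolding einv_def by auto
    have i1: "1 / w a \<le> 1/m" "1 / w (astar K \<theta>) \<le> 1/m" using w1 assms(4)
      by (auto intro!: divide_left_mono)
    have i2: "1 / (gap K \<theta> a)\<^sup>2 \<le> 1 / Dm K \<theta>" using g D by (auto intro!: divide_left_mono mult_pos_pos)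
    have "(1 / w a + 1 / w (astar K \<theta>)) * (1 / (gap K \<theta> a)\<^sup>2) \<le> (2/m) * (1 / Dm K \<theta>)"
      apply (rule mult_mono) using i1 i2 w1 assms(4) D by auto
    then show ?thesis unfolding e using assms(4) D by simp
  qed
  then show ?thesis unfolding objective_def obj_set
    using Aset_fin Aset_ne[OF assms(1,2)] by (simp add: Max_le_iff)
qed

lemma einv_ge1: assumes "0 \<le> x" "x \<le> 1" shows "einv x \<ge> 1"
  using assms unfolding einv_def by auto

lemma einv_ge0: assumes "0 \<le> x" shows "einv x \<ge> 0"
  using assms unfolding einv_def by auto

lemma obj_ge:
  assumes "K \<ge> 2" "in_Theta K \<theta>" "\<forall>a<K. 0 \<le> w a \<and> w a \<le> 1"
  shows "objective K \<theta> w \<ge> ereal (1 / Mx K \<theta>)"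
proof -
  obtain a where a: "a \<in> Aset K \<theta>" using Aset_ne[OF assms(1,2)] by blast
  have as: "astar K \<theta> < K" using astar_prop[OF assms(2)] by blast
  have aK: "a < K" using a unfolding Aset_def by auto
  have gp: "gap K \<theta> a > 0" using gap_pos[OF assms(2) a] .
  have s: "einv (w a) + einv (w (astar K \<theta>)) \<ge> 1"
    using einv_ge0[of "w a"] einv_ge1[of "w (astar K \<theta>)"] assms(3) aK as
    by (metis add_mono add_0 order_refl)
  have "ereal (1 / Mx K \<theta>) \<le> ereal (1 / (gap K \<theta> a)\<^sup>2)"
    using Mx_ge[OF a] gp Mx_pos[OF assms(1,2)] by (auto intro!: divide_left_mono mult_pos_pos)
  also have "\<dots> = 1 * ereal (1 / (gap K \<theta> a)\<^sup>2)" by simp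
  also have "\<dots> \<le> (einv (w a) + einv (w (astar K \<theta>))) * ereal (1 / (gap K \<theta> a)\<^sup>2)"
    by (rule ereal_mult_right_mono[OF s]) simp
  also have "\<dots> \<le> objective K \<theta> w" unfolding objective_def obj_set
    using Aset_fin a by (intro Max_ge) auto
  finally show ?thesis .
qed

lemma Tp_ge:
  assumes "K \<ge> 2" "in_Theta K \<theta>"
  shows "Tstar_p K \<theta> q \<ge> ereal (2 / Mx K \<theta>)"
proof -
  have "ereal (1 / Mx K \<theta>) \<le> (INF w \<in> Sigma_p K q. objective K \<theta> w)"
    by (rule INF_greatest, rule obj_ge[OF assms]) (auto simp: Sigma_p_def)
  then have "2 * ereal (1 / Mx K \<theta>) \<le> 2 * (INF w \<in> Sigma_p K q. objective K \<theta> w)"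
    by (rule ereal_mult_left_mono) simp
  then show ?thesis unfolding Tstar_p_def by simp
qed

lemma Tp_le:
  assumes "K \<ge> 2" "in_Theta K \<theta>" "w \<in> Sigma_p K q" "\<forall>a<K. m \<le> w a" "m > 0"
  shows "Tstar_p K \<theta> q \<le> ereal (4 / (m * Dm K \<theta>))"
proof -
  have "(INF w \<in> Sigma_p K q. objective K \<theta> w) \<le> ereal (2 / (m * Dm K \<theta>))"
    using INF_lower[OF assms(3), of "objective K \<theta>"] obj_le[OF assms(1,2,4,5)] by simp
  then have "2 * (INF w \<in> Sigma_p K q. objective K \<theta> w) \<le> 2 * ereal (2 / (m * Dm K \<theta>))"
    by (rule ereal_mult_left_mono) simp
  then show ?thesis unfolding Tstar_p_def by simp
qed


theorem lemma1:
  fixes K :: nat and \<theta> :: "nat \<Rightarrow> real"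
  assumes "K \<ge> 2" and "in_Theta K \<theta>"
  shows "\<exists>C::real. C > 0 \<and>
    (\<forall>p::nat \<Rightarrow> real. (\<forall>a<K. 0 \<le> p a \<and> p a \<le> 1) \<and> psum K p \<le> 1 \<longrightarrow>
       1 \<le> Tstar_p K \<theta> p / Tstar K \<theta> \<and>
       Tstar_p K \<theta> p / Tstar K \<theta> \<le>
         ereal C * min (einv (1 - psum K p))
                       (if (\<forall>a<K. p a > 0) then einv (real K * pmin K p) else \<infinity>))"
proof -
  define D where "D = Dm K \<theta>"
  define M where "M = Mx K \<theta>"
  have D: "D > 0" unfolding D_def using Dm_pos[OF assms] .
  have M: "M > 0" unfolding M_def using Mx_pos[OF assms] .
  have K0: "real K > 0" using assms(1) by simp
  define u where "u = (\<lambda>a. if a < K then 1 / real K else 0)"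
  have uS: "u \<in> Sigma_p K (\<lambda>_. 0)" unfolding Sigma_p_def u_def using K0 by auto
  have Tup: "Tstar K \<theta> \<le> ereal (4 / ((1 / real K) * D))"
    unfolding Tstar_def D_def by (rule Tp_le[OF assms uS]) (use K0 in \<open>auto simp: u_def\<close>)
  have Tlo: "Tstar K \<theta> \<ge> ereal (2 / M)" unfolding Tstar_def M_def by (rule Tp_ge[OF assms])
  obtain T where TT: "Tstar K \<theta> = ereal T" using Tup Tlo
    by (cases "Tstar K \<theta>") auto
  have T2: "T \<ge> 2 / M" using Tlo TT by simp
  have Tpos: "T > 0" using T2 M by (smt (verit) divide_pos_pos)
  define C where "C = 2 * M * real K / D"
  have C: "C > 0" unfolding C_def using M D K0 by simp
  show ?thesis
  proof (intro exI[of _ C] conjI allI impI C)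
    fix p :: "nat \<Rightarrow> real"
    assume p: "(\<forall>a<K. 0 \<le> p a \<and> p a \<le> 1) \<and> psum K p \<le> 1"
    have p0: "\<forall>a<K. 0 \<le> p a" using p by auto
    have ps1: "psum K p \<le> 1" using p by auto
    have pale: "p a \<le> psum K p" if "a < K" for a
      unfolding psum_def using p0 that by (intro member_le_sum) auto
    define w where "w = (\<lambda>a. if a < K then p a + (1 - psum K p) / real K else 0)"
    have q0: "(1 - psum K p) / real K \<ge> 0" using ps1 K0 by simp
    have q1: "(1 - psum K p) / real K \<le> 1 - psum K p"
      using divide_left_mono[of 1 "real K" "1 - psum K p"] ps1 assms(1) by simp
    have wsum: "(\<Sum>a<K. w a) = 1"
      unfolding w_def using K0 by (simp add: sum.distrib psum_def[symmetric])
    have wS: "w \<in> Sigma_p K p"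
    proof -
      have "w a \<le> 1" if "a < K" for a using pale[OF that] q1 that by (simp add: w_def)
      then show ?thesis
        unfolding Sigma_p_def using wsum p0 q0 by (auto simp: w_def)
    qed
    have sub: "Sigma_p K p \<subseteq> Sigma_p K (\<lambda>_. 0)" unfolding Sigma_p_def by auto
    have "Tstar K \<theta> \<le> Tstar_p K \<theta> p" unfolding Tstar_def Tstar_p_def
      by (intro ereal_mult_left_mono INF_superset_mono[OF sub]) auto
    then show "1 \<le> Tstar_p K \<theta> p / Tstar K \<theta>"
      unfolding TT using Tpos by (subst ereal_le_divide_pos) auto
    have gen: "Tstar_p K \<theta> p \<le> ereal T * (ereal C * ereal (1 / (real K * m)))"
      if m: "m > 0" "\<forall>a<K. m \<le> w a" for m
    proof -
      have "Tstar_p K \<theta> p \<le> ereal (4 / (m * D))" unfolding D_def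
        by (rule Tp_le[OF assms wS m(2) m(1)])
      also have "4 / (m * D) \<le> T * (C * (1 / (real K * m)))"
      proof -
        have "T * (C * (1 / (real K * m))) = T * M * (2 / (m * D))"
          unfolding C_def using K0 m D by (simp add: field_simps)
        also have "\<dots> \<ge> 2 * (2 / (m * D))"
          by (rule mult_right_mono) (use T2 M m D in \<open>auto simp: field_simps\<close>)
        finally show ?thesis by simp
      qed
      then have "ereal (4 / (m * D)) \<le> ereal T * (ereal C * ereal (1 / (real K * m)))" by simp
      finally show ?thesis .
    qed
    have b1: "Tstar_p K \<theta> p / Tstar K \<theta> \<le> ereal C * einv (1 - psum K p)"
    proof (cases "psum K p = 1")
      case True then show ?thesis using C by (simp add: einv_def)
    next
      case False
      then have lt: "psum K p < 1" using ps1 by simp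
      define m where "m = (1 - psum K p) / real K"
      have m: "m > 0" unfolding m_def using lt K0 by simp
      have "\<forall>a<K. m \<le> w a" unfolding m_def w_def using p0 by auto
      from gen[OF m this] have "Tstar_p K \<theta> p \<le> ereal T * (ereal C * einv (1 - psum K p))"
        unfolding m_def einv_def using K0 lt by simp
      then show ?thesis unfolding TT using Tpos by (subst ereal_divide_le_pos) auto
    qed
    have b2: "Tstar_p K \<theta> p / Tstar K \<theta> \<le> ereal C *
        (if (\<forall>a<K. p a > 0) then einv (real K * pmin K p) else \<infinity>)"
    proof (cases "\<forall>a<K. p a > 0")
      case False
      then have "(if (\<forall>a<K. p a > 0) then einv (real K * pmin K p) else \<infinity>) = \<infinity>" by (simp only: if_False)
      then show ?thesis using C by simp
    next
      case True
      have set: "{p a | a. a < K \<and> p a > 0} = p ` {..<K}" using True by auto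
      have pm: "pmin K p \<in> p ` {..<K}" unfolding pmin_def set using K0 by (intro Min_in) auto
      have pml: "pmin K p \<le> p a" if "a < K" for a unfolding pmin_def set using that by simp
      have m: "pmin K p > 0" using pm True by auto
      have "\<forall>a<K. pmin K p \<le> w a" unfolding w_def using pml q0 by (auto intro: add_increasing2)
      from gen[OF m this] have "Tstar_p K \<theta> p \<le> ereal T * (ereal C * einv (real K * pmin K p))"
        unfolding einv_def using K0 m by simp
      then show ?thesis unfolding TT using Tpos True by (subst ereal_divide_le_pos) auto
    qed
    show "Tstar_p K \<theta> p / Tstar K \<theta> \<le> ereal C * min (einv (1 - psum K p))
                       (if (\<forall>a<K. p a > 0) then einv (real K * pmin K p) else \<infinity>)"
      using b1 b2 by (cases "einv (1 - psum K p) \<le> (if (\<forall>a<K. p a > 0) then einv (real K * pmin K p) else \<infinity>)")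
        (auto simp: min_def)
  qed
qed

end
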